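(* Let $(\alpha_i)_{i\in I}$, $I=\{1,2,\dots\}\cup\{\omega\}$, be a family of non-negative reals, let $j$ be a positive integer, and let $(\beta_i)_{i\in I}$ be obtained from $(\alpha_i)$ by rearranging $\alpha_j,\alpha_{j+1}$ from smaller to larger, i.e. $\beta_j=\min(\alpha_j,\alpha_{j+1})$, $\beta_{j+1}=\max(\alpha_j,\alpha_{j+1})$, and $\beta_i=\alpha_i$ for $i\notin\{j,j+1\}$. If $\kappa_i(\alpha_i)$ and $\kappa_i(\beta_i)$ converge, then $\kappa_i(\alpha_i)\ge\kappa_i(\beta_i)$.
   Context: For a family $(\gamma_i)_{i\in I}$ of non-negative reals (with $n<\omega$ for all positive integers $n$), $\kappa_i(\gamma_i)$ is the limit of the approximants $P_0=\gamma_\omega$, $P_n=\sqrt{\gamma_1^{2^1}+\sqrt{\gamma_2^{2^2}+\dots+\sqrt{\gamma_n^{2^n}+\gamma_\omega^{2^n}}}}$ ($n$ nested roots). *)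

theory Defs
  imports Complex_Main
begin

text \<open>A family indexed by I = {1,2,...} \<union> {omega} is represented by a function
  g :: nat \<Rightarrow> real (only the values at positive indices matter) together with a real w
  (the value at omega).\<close>

definition kappa_approx :: "(nat \<Rightarrow> real) \<Rightarrow> real \<Rightarrow> nat \<Rightarrow> real" where
  "kappa_approx g w n = foldr (\<lambda>i x. sqrt (g i ^ (2 ^ i) + x)) [1..<Suc n] (w ^ (2 ^ n))"

definition kappa_converges :: "(nat \<Rightarrow> real) \<Rightarrow> real \<Rightarrow> bool" where
  "kappa_converges g w = convergent (kappa_approx g w)"

definition kappa :: "(nat \<Rightarrow> real) \<Rightarrow> real \<Rightarrow> real" where
  "kappa g w = lim (kappa_approx g w)"

end

theory Submission
  imports Defs
begin

lemma key_ineq: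
  fixes A B x :: real
  assumes "B \<le> A" "0 \<le> B" "0 \<le> x"
  shows "B + sqrt (A^2 + x) \<le> A + sqrt (B^2 + x)"
proof -
  define s where "s = sqrt (B^2 + x)"
  have sB: "B \<le> s" unfolding s_def using assms
    by (metis abs_of_nonneg le_add_same_cancel1 real_sqrt_abs real_sqrt_le_mono)
  have "A^2 + x \<le> (A - B + s)^2"
  proof -
    have "s^2 = B^2 + x" unfolding s_def using assms by simp
    moreover have "0 \<le> (A - B) * (s - B)" using assms sB by simp
    ultimately show ?thesis by (simp add: power2_eq_square algebra_simps)
  qed
  hence "sqrt (A^2 + x) \<le> A - B + s"
    using assms sB by (simp add: real_le_lsqrt)
  thus ?thesis unfolding s_def by simp
qed

lemma foldr_mono:
  fixes g :: "nat \<Rightarrow> real"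
  assumes "x \<le> y"
  shows "foldr (\<lambda>i x. sqrt (g i ^ (2 ^ i) + x)) xs x \<le> foldr (\<lambda>i x. sqrt (g i ^ (2 ^ i) + x)) xs y"
  using assms by (induction xs) auto

lemma foldr_nonneg:
  fixes g :: "nat \<Rightarrow> real"
  assumes "0 \<le> x" "\<forall>i\<in>set xs. 0 \<le> g i"
  shows "0 \<le> foldr (\<lambda>i x. sqrt (g i ^ (2 ^ i) + x)) xs x"
  using assms by (induction xs) auto

lemma foldr_cong_g:
  fixes g h :: "nat \<Rightarrow> real"
  assumes "\<forall>i\<in>set xs. g i = h i"
  shows "foldr (\<lambda>i x. sqrt (g i ^ (2 ^ i) + x)) xs x = foldr (\<lambda>i x. sqrt (h i ^ (2 ^ i) + x)) xs x"
  using assms by (induction xs) auto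

theorem lemma10:
  fixes \<alpha> :: "nat \<Rightarrow> real" and \<alpha>\<omega> :: real and j :: nat
  assumes "\<forall>i\<ge>1. \<alpha> i \<ge> 0" and "\<alpha>\<omega> \<ge> 0" and "j \<ge> 1"
    and "\<beta> = \<alpha>(j := min (\<alpha> j) (\<alpha> (Suc j)), Suc j := max (\<alpha> j) (\<alpha> (Suc j)))"
    and "kappa_converges \<alpha> \<alpha>\<omega>" and "kappa_converges \<beta> \<alpha>\<omega>"
  shows "kappa \<alpha> \<alpha>\<omega> \<ge> kappa \<beta> \<alpha>\<omega>"
proof -
  let ?F = "\<lambda>g xs x. foldr (\<lambda>i x. sqrt (g i ^ (2 ^ i) + x)) xs (x::real)"
  have step: "kappa_approx \<beta> \<alpha>\<omega> n \<le> kappa_approx \<alpha> \<alpha>\<omega> n" if n: "n \<ge> Suc j" for n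
  proof -
    have L: "[1..<Suc n] = [1..<j] @ [j, Suc j] @ [Suc (Suc j)..<Suc n]"
    proof -
      have "[1..<Suc n] = [1..<j] @ [j..<Suc n]"
        using n assms(3) upt_add_eq_append[of 1 j "Suc n - j"] by simp
      moreover have "[j..<Suc n] = j # Suc j # [Suc (Suc j)..<Suc n]"
        using n by (simp add: upt_conv_Cons)
      ultimately show ?thesis by simp
    qed
    define y where "y = ?F \<alpha> [Suc (Suc j)..<Suc n] (\<alpha>\<omega> ^ (2 ^ n))"
    have y0: "0 \<le> y" unfolding y_def using assms(2) assms(1) by (intro foldr_nonneg) auto
    have yb: "?F \<beta> [Suc (Suc j)..<Suc n] (\<alpha>\<omega> ^ (2 ^ n)) = y"
      unfolding y_def using assms(4) by (intro foldr_cong_g) auto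
    have pre: "?F \<beta> [1..<j] z = ?F \<alpha> [1..<j] z" for z
      using assms(4) by (intro foldr_cong_g) auto
    have mid: "sqrt (\<beta> j ^ 2^j + sqrt (\<beta> (Suc j) ^ 2^(Suc j) + y))
             \<le> sqrt (\<alpha> j ^ 2^j + sqrt (\<alpha> (Suc j) ^ 2^(Suc j) + y))"
    proof (cases "\<alpha> j \<le> \<alpha> (Suc j)")
      case True
      then show ?thesis using assms(4) by simp
    next
      case False
      define a where "a = \<alpha> j"
      define b where "b = \<alpha> (Suc j)"
      have b0: "0 \<le> b" unfolding b_def using assms(1) by simp
      have ba: "b \<le> a" using False unfolding a_def b_def by simp
      have BA: "b ^ 2^j \<le> a ^ 2^j" using b0 ba by (intro power_mono)
      have e: "c ^ 2^(Suc j) = (c ^ 2^j)^2" for c :: real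
        by (metis power_Suc2 power_mult)
      have "b ^ 2^j + sqrt ((a ^ 2^j)^2 + y) \<le> a ^ 2^j + sqrt ((b ^ 2^j)^2 + y)"
        using key_ineq[OF BA _ y0] b0 by simp
      then show ?thesis using assms(4) False unfolding a_def[symmetric] b_def[symmetric] e
        by simp
    qed
    have "kappa_approx \<beta> \<alpha>\<omega> n = ?F \<beta> [1..<j] (sqrt (\<beta> j ^ 2^j + sqrt (\<beta> (Suc j) ^ 2^(Suc j) + y)))"
      unfolding kappa_approx_def L using yb by simp
    also have "\<dots> \<le> ?F \<alpha> [1..<j] (sqrt (\<alpha> j ^ 2^j + sqrt (\<alpha> (Suc j) ^ 2^(Suc j) + y)))"
      unfolding pre by (rule foldr_mono[OF mid])
    also have "\<dots> = kappa_approx \<alpha> \<alpha>\<omega> n"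
      unfolding kappa_approx_def L y_def by simp
    finally show ?thesis .
  qed
  have ca: "kappa_approx \<alpha> \<alpha>\<omega> \<longlonglongrightarrow> kappa \<alpha> \<alpha>\<omega>"
    using assms(5) unfolding kappa_converges_def kappa_def by (simp add: convergent_LIMSEQ_iff)
  have cb: "kappa_approx \<beta> \<alpha>\<omega> \<longlonglongrightarrow> kappa \<beta> \<alpha>\<omega>"
    using assms(6) unfolding kappa_converges_def kappa_def by (simp add: convergent_LIMSEQ_iff)
  show ?thesis using LIMSEQ_le[OF cb ca] step by blast
qed

end
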